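(* Let $p$ be a prime, $q=p^e$, $m,k\ge1$, and let $d$ be an integer with $0<d\le k(q^m-1)$. Then there exists a homogeneous polynomial $f\in\mathbb{F}_{q^m}[x_1,\dots,x_k]$ of degree $d$ such that $\nu_p\big(N(f=y^q-y)\big)\le em\lceil k/d\rceil$.
   Context: $N(f=y^q-y)$ denotes the number of $(x_1,\dots,x_k,y)\in\mathbb{F}_{q^m}^{k+1}$ with $f(x_1,\dots,x_k)=y^q-y$; $\nu_p$ is the $p$-adic valuation. *)

theory Defs
  imports Complex_Main "HOL-Library.Poly_Mapping" "HOL-Library.FuncSet" "HOL-Computational_Algebra.Primes"
begin

text \<open>Multivariate polynomials over a commutative ring: finitely supported maps from
  monomials (finitely supported exponent vectors, variables indexed by nat) to coefficients.\<close>
type_synonym 'a mpoly = "(nat \<Rightarrow>\<^sub>0 nat) \<Rightarrow>\<^sub>0 'a"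

definition mpoly_in_vars :: "nat \<Rightarrow> 'a::zero mpoly \<Rightarrow> bool" where
  "mpoly_in_vars k f \<longleftrightarrow> (\<forall>\<alpha>\<in>Poly_Mapping.keys f. Poly_Mapping.keys \<alpha> \<subseteq> {..<k})"

definition monomial_degree :: "(nat \<Rightarrow>\<^sub>0 nat) \<Rightarrow> nat" where
  "monomial_degree \<alpha> = (\<Sum>i\<in>Poly_Mapping.keys \<alpha>. Poly_Mapping.lookup \<alpha> i)"

definition homogeneous_of_degree :: "nat \<Rightarrow> 'a::zero mpoly \<Rightarrow> bool" where
  "homogeneous_of_degree d f \<longleftrightarrow> f \<noteq> 0 \<and> (\<forall>\<alpha>\<in>Poly_Mapping.keys f. monomial_degree \<alpha> = d)"

definition mpoly_eval :: "'a::comm_ring_1 mpoly \<Rightarrow> (nat \<Rightarrow> 'a) \<Rightarrow> 'a" where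
  "mpoly_eval f x = (\<Sum>\<alpha>\<in>Poly_Mapping.keys f. Poly_Mapping.lookup f \<alpha> * (\<Prod>i\<in>Poly_Mapping.keys \<alpha>. x i ^ Poly_Mapping.lookup \<alpha> i))"

text \<open>N(f = y^q - y): number of (x_1..x_k, y) in K^(k+1) with f(x) = y^q - y,
  where points of K^k are extensional functions on {0..<k}.\<close>
definition N_AS :: "nat \<Rightarrow> nat \<Rightarrow> 'a::{finite,field} mpoly \<Rightarrow> nat" where
  "N_AS k q f = card {(x, y). x \<in> ({..<k} \<rightarrow>\<^sub>E (UNIV::'a set)) \<and> mpoly_eval f x = y ^ q - y}"

end

theory Submission
  imports Defs
begin

lemma card_times_zero:
  fixes x :: "'a::{finite,field}"
  shows "of_nat (card (UNIV::'a set)) * x = 0"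
proof -
  have "(\<Sum>a\<in>UNIV. a + x) = (\<Sum>a\<in>(UNIV::'a set). a)"
    by (rule sum.reindex_bij_witness[of _ "\<lambda>a. a - x" "\<lambda>a. a + x"]) auto
  then show ?thesis by (simp add: sum.distrib)
qed

lemma CHAR_eq:
  assumes "prime p" "card (UNIV::'a::{finite,field} set) = p ^ n"
  shows "CHAR('a) = p"
proof -
  have "of_nat (p ^ n) = (0::'a)"
    using card_times_zero[of "1::'a"] assms(2) by simp
  then have "CHAR('a) dvd p ^ n" using of_nat_eq_0_iff_char_dvd by blast
  moreover have "prime CHAR('a)"
    by (intro prime_CHAR_semidom finite_imp_CHAR_pos) simp
  ultimately have "CHAR('a) dvd p" using prime_dvd_power by blast
  then show ?thesis using \<open>prime CHAR('a)\<close> assms(1) primes_dvd_imp_eq by blast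
qed


definition nf :: "nat \<Rightarrow> 'a::{finite,field} \<Rightarrow> nat" where
  "nf q w = card {y::'a. y ^ q - y = w}"

lemma nf_sum: "(\<Sum>w\<in>UNIV. nf q (w::'a::{finite,field})) = card (UNIV::'a set)"
proof -
  have "card (UNIV::'a set) = card (\<Union>w::'a. {y::'a. y ^ q - y = w})" by (rule arg_cong[where f=card]) auto
  also have "\<dots> = (\<Sum>w\<in>UNIV. card {y::'a. y ^ q - y = (w::'a)})"
    by (rule card_UN_disjoint) auto
  finally show ?thesis by (simp add: nf_def)
qed

lemma nf_shift:
  fixes r s :: "'a::{finite,field}"
  assumes "r \<noteq> 0"
  shows "(\<Sum>t\<in>UNIV. nf q (t * r + s)) = card (UNIV::'a set)"
proof -
  have "(\<Sum>t\<in>UNIV. nf q (t * r + s)) = (\<Sum>w\<in>UNIV. nf q (w::'a))"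
    by (rule sum.reindex_bij_witness[of _ "\<lambda>w. (w - s) / r" "\<lambda>t. t * r + s"]) (use assms in \<open>auto simp: field_simps\<close>)
  then show ?thesis using nf_sum by simp
qed

lemma nf_vals:
  fixes w :: "'a::{finite,field}"
  assumes "prime CHAR('a)" "q = CHAR('a) ^ e"
  shows "nf q w = 0 \<or> nf q w = nf q (0::'a)"
proof (cases "\<exists>y0::'a. y0 ^ q - y0 = w")
  case True
  then obtain y0 :: 'a where y0: "y0 ^ q - y0 = w" by blast
  have add: "(a + b) ^ q = a ^ q + b ^ q" for a b :: 'a
    using freshmans_dream'[OF assms] by blast
  have "{y::'a. y ^ q - y = w} = (\<lambda>z. z + y0) ` {z. z ^ q - z = 0}"
  proof (intro set_eqI iffI)
    fix y :: 'a assume "y \<in> {y. y ^ q - y = w}"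
    then have "(y - y0) ^ q - (y - y0) = 0"
      using add[of "y - y0" y0] y0 by (simp add: algebra_simps)
    then show "y \<in> (\<lambda>z. z + y0) ` {z. z ^ q - z = 0}"
      by (intro image_eqI[of _ _ "y - y0"]) auto
  next
    fix y :: 'a assume "y \<in> (\<lambda>z. z + y0) ` {z. z ^ q - z = 0}"
    then obtain z where "z ^ q - z = 0" "y = z + y0" by auto
    then show "y \<in> {y. y ^ q - y = w}" using add[of z y0] y0 by (simp add: algebra_simps)
  qed
  then have "nf q w = card {z::'a. z ^ q - z = 0}"
    unfolding nf_def by (simp add: card_image inj_on_def)
  then show ?thesis by (simp add: nf_def)
next
  case False
  then show ?thesis by (simp add: nf_def)
qed

lemma nf0_ge2:
  assumes "q \<ge> 1"
  shows "nf q (0::'a::{finite,field}) \<ge> 2"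
proof -
  have "{0, 1} \<subseteq> {y::'a. y ^ q - y = 0}" using assms by auto
  then have "card {0, 1::'a} \<le> card {y::'a. y ^ q - y = 0}" by (intro card_mono) auto
  then show ?thesis by (simp add: nf_def)
qed

lemma p_dvd_nf0:
  assumes "prime p" "card (UNIV::'a::{finite,field} set) = p ^ n" "q = p ^ e" "e \<ge> 1"
  shows "p dvd nf q (0::'a)"
proof -
  have ch: "CHAR('a) = p" by (rule CHAR_eq[OF assms(1,2)]) 
  have "prime CHAR('a)" using ch assms(1) by simp
  then have vals: "nf q w = 0 \<or> nf q w = nf q (0::'a)" for w :: 'a
    using nf_vals[of q e w] ch assms(3) by blast
  have "(\<Sum>w\<in>UNIV. nf q (w::'a)) = (\<Sum>w\<in>{w::'a. nf q w \<noteq> 0}. nf q (w::'a))"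
    by (rule sum.mono_neutral_right) auto
  also have "\<dots> = (\<Sum>w\<in>{w::'a. nf q w \<noteq> 0}. nf q (0::'a))"
    by (rule sum.cong) (use vals in force)+
  finally have "card (UNIV::'a set) = card {w::'a. nf q w \<noteq> 0} * nf q (0::'a)"
    using nf_sum[where q=q, where 'a='a] by simp
  then have "nf q (0::'a) dvd p ^ n" using assms(2) by (metis dvd_triv_right)
  then obtain i where i: "nf q (0::'a) = p ^ i" using divides_primepow_nat assms(1) by blast
  have "q \<ge> 1" using assms(1,3) prime_gt_0_nat by (simp add: Suc_leI)
  then have "nf q (0::'a) \<ge> 2" by (rule nf0_ge2)
  then have "i \<noteq> 0" using i by (cases i) auto
  then show ?thesis using i by (simp add: dvd_power)
qed

lemma sum_PiE_Un:
  fixes g :: "('i \<Rightarrow> 'a) \<Rightarrow> 'b::comm_monoid_add"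
  assumes "finite I" "finite J" "I \<inter> J = {}"
  shows "(\<Sum>x\<in>PiE (I \<union> J) (\<lambda>_. A). g x) =
         (\<Sum>y\<in>PiE I (\<lambda>_. A). \<Sum>z\<in>PiE J (\<lambda>_. A). g (\<lambda>i. if i \<in> I then y i else z i))"
proof -
  have "(\<Sum>y\<in>PiE I (\<lambda>_. A). \<Sum>z\<in>PiE J (\<lambda>_. A). g (\<lambda>i. if i \<in> I then y i else z i)) =
        (\<Sum>(y,z)\<in>PiE I (\<lambda>_. A) \<times> PiE J (\<lambda>_. A). g (\<lambda>i. if i \<in> I then y i else z i))"
    by (rule sum.cartesian_product)
  also have "\<dots> = (\<Sum>x\<in>PiE (I \<union> J) (\<lambda>_. A). g x)"
  proof (rule sum.reindex_bij_witness[of _ "\<lambda>x. (restrict x I, restrict x J)" "\<lambda>(y,z) i. if i \<in> I then y i else z i"])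
    fix b assume "b \<in> PiE (I \<union> J) (\<lambda>_. A)"
    then show "(\<lambda>(y, z) i. if i \<in> I then y i else z i) (restrict b I, restrict b J) = b"
      by (auto simp: PiE_def extensional_def fun_eq_iff)
  next
    fix b assume "b \<in> PiE (I \<union> J) (\<lambda>_. A)"
    then show "(restrict b I, restrict b J) \<in> PiE I (\<lambda>_. A) \<times> PiE J (\<lambda>_. A)"
      by auto
  next
    fix a assume "a \<in> PiE I (\<lambda>_. A) \<times> PiE J (\<lambda>_. A)"
    then show "(\<lambda>x. (restrict x I, restrict x J)) ((\<lambda>(y, z) i. if i \<in> I then y i else z i) a) = a"
      using assms(3) by (cases a) (auto simp: PiE_def extensional_def fun_eq_iff restrict_def)
  next
    fix a assume "a \<in> PiE I (\<lambda>_. A) \<times> PiE J (\<lambda>_. A)"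
    then show "(\<lambda>(y, z) i. if i \<in> I then y i else z i) a \<in> PiE (I \<union> J) (\<lambda>_. A)"
      by (cases a) (auto simp: PiE_def extensional_def)
  next
    fix a assume "a \<in> PiE I (\<lambda>_. A) \<times> PiE J (\<lambda>_. A)"
    then show "g ((\<lambda>(y, z) i. if i \<in> I then y i else z i) a) = (case a of (y, z) \<Rightarrow> g (\<lambda>i. if i \<in> I then y i else z i))"
      by (cases a) auto
  qed
  finally show ?thesis by simp
qed

lemma sum_PiE_single:
  "(\<Sum>v\<in>PiE {a} (\<lambda>_. A). g (v a)) = (\<Sum>t\<in>A. g t)"
  by (rule sum.reindex_bij_witness[of _ "\<lambda>t i. if i = a then t else undefined" "\<lambda>v. v a"])
     (auto simp: PiE_def extensional_def fun_eq_iff)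

lemma sum_affine:
  fixes r s :: "'a::{finite,field}"
  assumes "r \<noteq> 0"
  shows "(\<Sum>t\<in>UNIV. h (t * r + s)) = (\<Sum>w\<in>UNIV. h (w::'a))"
  by (rule sum.reindex_bij_witness[of _ "\<lambda>w. (w - s) / r" "\<lambda>t. t * r + s"]) (use assms in \<open>auto simp: field_simps\<close>)

lemma sum_linear_PiE:
  fixes r :: "'i \<Rightarrow> 'a::{finite,field}" and h :: "'a \<Rightarrow> 'b::comm_semiring_1"
  assumes "finite P" "j0 \<in> P" "r j0 \<noteq> 0"
  shows "(\<Sum>u\<in>PiE P (\<lambda>_. UNIV). h (\<Sum>j\<in>P. u j * r j)) =
         of_nat (card (UNIV::'a set) ^ (card P - 1)) * (\<Sum>w\<in>UNIV. h w)"
proof -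
  have P: "P = (P - {j0}) \<union> {j0}" using assms(2) by auto
  have "(\<Sum>u\<in>PiE P (\<lambda>_. UNIV). h (\<Sum>j\<in>P. u j * r j)) =
        (\<Sum>u\<in>PiE ((P - {j0}) \<union> {j0}) (\<lambda>_. UNIV). h (\<Sum>j\<in>P. u j * r j))"
    using P by simp
  also have "\<dots> = (\<Sum>y\<in>PiE (P - {j0}) (\<lambda>_. UNIV). \<Sum>z\<in>PiE {j0} (\<lambda>_. UNIV).
        h (\<Sum>j\<in>P. (if j \<in> P - {j0} then y j else z j) * r j))"
    by (rule sum_PiE_Un) (use assms in auto)
  also have "\<dots> = (\<Sum>y\<in>PiE (P - {j0}) (\<lambda>_. UNIV). \<Sum>z\<in>PiE {j0} (\<lambda>_. UNIV).
        h (z j0 * r j0 + (\<Sum>j\<in>P - {j0}. y j * r j)))"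
  proof (intro sum.cong refl)
    fix y z
    have "(\<Sum>j\<in>P. (if j \<in> P - {j0} then y j else z j) * r j) =
          (if j0 \<in> P - {j0} then y j0 else z j0) * r j0 + (\<Sum>j\<in>P - {j0}. (if j \<in> P - {j0} then y j else z j) * r j)"
      using assms by (subst sum.remove[of P j0]) auto
    also have "\<dots> = z j0 * r j0 + (\<Sum>j\<in>P - {j0}. y j * r j)"
      by (intro arg_cong2[where f="(+)"] refl sum.cong) auto
    finally show "h (\<Sum>j\<in>P. (if j \<in> P - {j0} then y j else z j) * r j) = h (z j0 * r j0 + (\<Sum>j\<in>P - {j0}. y j * r j))"
      by simp
  qed
  also have "\<dots> = (\<Sum>y\<in>PiE (P - {j0}) (\<lambda>_. UNIV::'a set). (\<Sum>w\<in>UNIV. h w))"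
  proof (intro sum.cong refl)
    fix y :: "'i \<Rightarrow> 'a"
    have "(\<Sum>z\<in>PiE {j0} (\<lambda>_. UNIV). h (z j0 * r j0 + (\<Sum>j\<in>P - {j0}. y j * r j))) =
          (\<Sum>t\<in>UNIV. h (t * r j0 + (\<Sum>j\<in>P - {j0}. y j * r j)))"
      by (rule sum_PiE_single)
    also have "\<dots> = (\<Sum>w\<in>UNIV. h w)" by (rule sum_affine) (use assms in auto)
    finally show "(\<Sum>z\<in>PiE {j0} (\<lambda>_. UNIV). h (z j0 * r j0 + (\<Sum>j\<in>P - {j0}. y j * r j))) = (\<Sum>w\<in>UNIV. h w)" .
  qed
  also have "\<dots> = of_nat (card (PiE (P - {j0}) (\<lambda>_. UNIV::'a set))) * (\<Sum>w\<in>UNIV. h w)"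
    by simp
  also have "card (PiE (P - {j0}) (\<lambda>_. UNIV::'a set)) = card (UNIV::'a set) ^ (card P - 1)"
    using assms by (simp add: card_PiE)
  finally show ?thesis .
qed

lemma N_pivot:
  fixes R :: "'i \<Rightarrow> ('i \<Rightarrow> 'a::{finite,field}) \<Rightarrow> 'a" and h :: "'a \<Rightarrow> nat"
  assumes "finite P" "finite Z" "P \<inter> Z = {}"
    and dep: "\<And>j x x'. (\<And>i. i \<in> Z \<Longrightarrow> x i = x' i) \<Longrightarrow> R j x = R j x'"
  shows "(\<Sum>x\<in>PiE (Z \<union> P) (\<lambda>_. UNIV). h (\<Sum>j\<in>P. x j * R j x)) =
    (\<Sum>z\<in>PiE Z (\<lambda>_. UNIV). if (\<forall>j\<in>P. R j z = 0) then card (UNIV::'a set) ^ card P * h 0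
        else card (UNIV::'a set) ^ (card P - 1) * (\<Sum>w\<in>UNIV. h w))"
proof -
  have "(\<Sum>x\<in>PiE (Z \<union> P) (\<lambda>_. UNIV). h (\<Sum>j\<in>P. x j * R j x)) =
    (\<Sum>z\<in>PiE Z (\<lambda>_. UNIV). \<Sum>u\<in>PiE P (\<lambda>_. UNIV). h (\<Sum>j\<in>P. (\<lambda>i. if i \<in> Z then z i else u i) j * R j (\<lambda>i. if i \<in> Z then z i else u i)))"
    by (rule sum_PiE_Un) (use assms in auto)
  also have "\<dots> = (\<Sum>z\<in>PiE Z (\<lambda>_. UNIV). \<Sum>u\<in>PiE P (\<lambda>_. UNIV). h (\<Sum>j\<in>P. u j * R j z))"
  proof (intro sum.cong refl arg_cong[where f=h])
    fix z u j assume "j \<in> P"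
    then have "j \<notin> Z" using assms(3) by auto
    moreover have "R j (\<lambda>i. if i \<in> Z then z i else u i) = R j z" by (rule dep) auto
    ultimately show "(\<lambda>i. if i \<in> Z then z i else u i) j * R j (\<lambda>i. if i \<in> Z then z i else u i) = u j * R j z"
      by simp
  qed
  also have "\<dots> = (\<Sum>z\<in>PiE Z (\<lambda>_. UNIV). if (\<forall>j\<in>P. R j z = 0) then card (UNIV::'a set) ^ card P * h 0
        else card (UNIV::'a set) ^ (card P - 1) * (\<Sum>w\<in>UNIV. h w))"
  proof (intro sum.cong refl)
    fix z :: "'i \<Rightarrow> 'a"
    show "(\<Sum>u\<in>PiE P (\<lambda>_. UNIV). h (\<Sum>j\<in>P. u j * R j z)) = (if (\<forall>j\<in>P. R j z = 0) then card (UNIV::'a set) ^ card P * h 0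
        else card (UNIV::'a set) ^ (card P - 1) * (\<Sum>w\<in>UNIV. h w))"
    proof (cases "\<forall>j\<in>P. R j z = 0")
      case True
      then have "(\<Sum>u\<in>PiE P (\<lambda>_. UNIV::'a set). h (\<Sum>j\<in>P. u j * R j z)) = (\<Sum>u\<in>PiE P (\<lambda>_. UNIV::'a set). h 0)"
        by (intro sum.cong refl) simp
      also have "\<dots> = card (UNIV::'a set) ^ card P * h 0"
        using assms(1) by (simp add: card_PiE)
      finally show ?thesis using True by simp
    next
      case False
      then obtain j0 where "j0 \<in> P" "R j0 z \<noteq> 0" by blast
      have "(\<Sum>u\<in>PiE P (\<lambda>_. UNIV). h (\<Sum>j\<in>P. u j * R j z)) = of_nat (card (UNIV::'a set) ^ (card P - 1)) * (\<Sum>w\<in>UNIV. h w)"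
        by (rule sum_linear_PiE[where r="\<lambda>j. R j z"]) (use assms(1) \<open>j0 \<in> P\<close> \<open>R j0 z \<noteq> 0\<close> in auto)
      then show ?thesis using False by auto
    qed
  qed
  finally show ?thesis .
qed

definition mmono :: "(nat \<Rightarrow>\<^sub>0 nat) \<Rightarrow> (nat \<Rightarrow> 'a::comm_ring_1) \<Rightarrow> 'a" where
  "mmono \<alpha> x = (\<Prod>i\<in>Poly_Mapping.keys \<alpha>. x i ^ Poly_Mapping.lookup \<alpha> i)"

lemma mmono_superset:
  assumes "finite T" "Poly_Mapping.keys \<alpha> \<subseteq> T"
  shows "mmono \<alpha> x = (\<Prod>i\<in>T. x i ^ Poly_Mapping.lookup \<alpha> i)"
  unfolding mmono_def
  by (rule prod.mono_neutral_left) (use assms in \<open>auto simp: in_keys_iff\<close>)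

lemma monomial_degree_superset:
  assumes "finite T" "Poly_Mapping.keys \<alpha> \<subseteq> T"
  shows "monomial_degree \<alpha> = (\<Sum>i\<in>T. Poly_Mapping.lookup \<alpha> i)"
  unfolding monomial_degree_def
  by (rule sum.mono_neutral_left) (use assms in \<open>auto simp: in_keys_iff\<close>)

lemma mpoly_eval_superset:
  assumes "finite S" "Poly_Mapping.keys f \<subseteq> S"
  shows "mpoly_eval f x = (\<Sum>\<alpha>\<in>S. Poly_Mapping.lookup f \<alpha> * mmono \<alpha> x)"
  unfolding mpoly_eval_def mmono_def
  by (rule sum.mono_neutral_left) (use assms in \<open>auto simp: in_keys_iff\<close>)

lemma mpoly_eval_add: "mpoly_eval (f + g) x = mpoly_eval f x + mpoly_eval g x"
proof -
  let ?S = "Poly_Mapping.keys f \<union> Poly_Mapping.keys g"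
  have "mpoly_eval (f + g) x = (\<Sum>\<alpha>\<in>?S. Poly_Mapping.lookup (f + g) \<alpha> * mmono \<alpha> x)"
    using keys_add[of f g] by (intro mpoly_eval_superset) auto
  also have "\<dots> = (\<Sum>\<alpha>\<in>?S. Poly_Mapping.lookup f \<alpha> * mmono \<alpha> x) + (\<Sum>\<alpha>\<in>?S. Poly_Mapping.lookup g \<alpha> * mmono \<alpha> x)"
    by (simp add: lookup_add distrib_right sum.distrib)
  also have "\<dots> = mpoly_eval f x + mpoly_eval g x"
    by (subst (1 2) mpoly_eval_superset[of ?S]) auto
  finally show ?thesis .
qed

lemma mpoly_eval_zero: "mpoly_eval 0 x = 0"
  by (simp add: mpoly_eval_def)

lemma mpoly_eval_sum: "mpoly_eval (\<Sum>j\<in>J. f j) x = (\<Sum>j\<in>J. mpoly_eval (f j) x)"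
  by (induction J rule: infinite_finite_induct) (auto simp: mpoly_eval_zero mpoly_eval_add)

lemma mpoly_eval_single: "mpoly_eval (Poly_Mapping.single \<alpha> a) x = a * mmono \<alpha> x"
  by (subst mpoly_eval_superset[of "{\<alpha>}"]) auto

lemma N_AS_sum:
  "N_AS k q f = (\<Sum>x\<in>PiE {..<k} (\<lambda>_. UNIV). nf q (mpoly_eval f (x::nat \<Rightarrow> 'a::{finite,field})))"
proof -
  have "{(x, y). x \<in> PiE {..<k} (\<lambda>_. UNIV::'a set) \<and> mpoly_eval f x = y ^ q - y} =
        Sigma (PiE {..<k} (\<lambda>_. UNIV)) (\<lambda>x. {y. mpoly_eval f x = y ^ q - y})"
    unfolding Sigma_def by blast
  then have "N_AS k q f = card (Sigma (PiE {..<k} (\<lambda>_. UNIV::'a set)) (\<lambda>x. {y. mpoly_eval f x = y ^ q - y}))"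
    unfolding N_AS_def by simp
  also have "\<dots> = (\<Sum>x\<in>PiE {..<k} (\<lambda>_. UNIV). card {y. mpoly_eval f x = y ^ q - y})"
    by (rule card_SigmaI) (simp_all add: finite_PiE)
  also have "\<dots> = (\<Sum>x\<in>PiE {..<k} (\<lambda>_. UNIV). nf q (mpoly_eval f x))"
  proof (intro sum.cong refl)
    fix x :: "nat \<Rightarrow> 'a"
    have "{y. mpoly_eval f x = y ^ q - y} = {y. y ^ q - y = mpoly_eval f x}" by (rule Collect_cong) (rule eq_commute)
    then show "card {y. mpoly_eval f x = y ^ q - y} = nf q (mpoly_eval f x)" unfolding nf_def by simp
  qed
  finally show ?thesis .
qed

lemma mult_le_small:
  assumes "prime (p::nat)" "N \<le> p ^ n"
  shows "multiplicity p N \<le> n"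
proof (cases "N = 0")
  case False
  have "p ^ multiplicity p N dvd N" by (rule multiplicity_dvd)
  then have "p ^ multiplicity p N \<le> N" using False by (intro dvd_imp_le) auto
  then have "p ^ multiplicity p N \<le> p ^ n" using assms(2) by linarith
  moreover have "1 < p" using assms(1) prime_gt_1_nat by blast
  ultimately show ?thesis using power_le_imp_le_exp by blast
qed simp

lemma mult_exact:
  assumes "prime (p::nat)" "\<not> p dvd M"
  shows "multiplicity p (p ^ n * M) = n"
proof (rule multiplicity_eqI)
  show "p ^ n dvd p ^ n * M" by simp
  show "\<not> p ^ Suc n dvd p ^ n * M"
  proof
    assume "p ^ Suc n dvd p ^ n * M"
    then have "p ^ n * p dvd p ^ n * M" by (simp add: mult.commute)
    then have "p dvd M" using assms(1) nat_mult_dvd_cancel1[of "p ^ n" p M] by (simp add: prime_gt_0_nat)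
    then show False using assms(2) by simp
  qed
qed

lemma single_neq0:
  assumes "v \<noteq> 0" shows "Poly_Mapping.single k v \<noteq> 0"
  using assms by (metis lookup_single_eq lookup_zero)

lemma mmono_single0: "mmono (Poly_Mapping.single 0 d) x = x 0 ^ d"
  by (cases "d = 0") (simp_all add: mmono_def)

lemma case_d1:
  assumes "k \<ge> 1"
  shows "\<exists>f :: 'a::{finite,field} mpoly. mpoly_in_vars k f \<and> homogeneous_of_degree 1 f \<and>
           N_AS k q f = card (UNIV::'a set) ^ k"
proof -
  define f :: "'a mpoly" where "f = Poly_Mapping.single (Poly_Mapping.single 0 1) 1"
  have "mpoly_in_vars k f" using assms by (simp add: f_def mpoly_in_vars_def)
  moreover have "homogeneous_of_degree 1 f"
    by (simp add: f_def homogeneous_of_degree_def monomial_degree_def single_neq0)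
  moreover have "N_AS k q f = card (UNIV::'a set) ^ k"
  proof -
    have ev: "mpoly_eval f x = (\<Sum>j\<in>{..<k}. x j * (if j = 0 then 1 else 0))" for x :: "nat \<Rightarrow> 'a"
    proof -
      have "(\<Sum>j\<in>{..<k}. x j * (if j = 0 then 1 else 0)) = (\<Sum>j\<in>{..<k}. if j = 0 then x j else 0)"
        by (intro sum.cong) auto
      also have "\<dots> = x 0" using assms by (subst sum.delta) auto
      finally show ?thesis by (simp add: f_def mpoly_eval_single mmono_single0)
    qed
    have "N_AS k q f = (\<Sum>x\<in>PiE {..<k} (\<lambda>_. UNIV). nf q (\<Sum>j\<in>{..<k}. x j * (if j = 0 then 1 else (0::'a))))"
      by (simp add: N_AS_sum ev)
    also have "\<dots> = of_nat (card (UNIV::'a set) ^ (card {..<k} - 1)) * (\<Sum>w\<in>UNIV. nf q (w::'a))"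
      by (rule sum_linear_PiE) (use assms in auto)
    also have "\<dots> = card (UNIV::'a set) ^ (k - 1) * card (UNIV::'a set)"
      by (simp add: nf_sum)
    also have "\<dots> = card (UNIV::'a set) ^ k"
      using assms by (metis Suc_diff_le diff_Suc_1 mult.commute power_Suc)
    finally show ?thesis .
  qed
  ultimately show ?thesis by blast
qed

lemma case_k1:
  assumes "d \<ge> 1"
  shows "\<exists>f :: 'a::{finite,field} mpoly. mpoly_in_vars 1 f \<and> homogeneous_of_degree d f \<and>
           N_AS 1 q f \<le> card (UNIV::'a set)"
proof -
  define Q where "Q = card (UNIV::'a set)"
  define Na where "Na a = (\<Sum>t\<in>(UNIV::'a set). nf q (a * t ^ d))" for a :: 'a
  have NAS: "N_AS 1 q (Poly_Mapping.single (Poly_Mapping.single 0 d) a) = Na a" for a :: 'a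
  proof -
    have "N_AS 1 q (Poly_Mapping.single (Poly_Mapping.single 0 d) a) =
          (\<Sum>x\<in>PiE {0::nat} (\<lambda>_. UNIV). nf q (a * x 0 ^ d))"
      by (simp add: N_AS_sum mpoly_eval_single mmono_single0 lessThan_Suc)
    also have "\<dots> = Na a" unfolding Na_def by (rule sum_PiE_single)
    finally show ?thesis .
  qed
  have nf0: "nf q (0::'a) \<le> Q" unfolding nf_def Q_def by (rule card_mono) auto
  have Q1: "Q \<ge> 1" unfolding Q_def by (simp add: Suc_leI finite_UNIV_card_ge_0)
  have inner: "(\<Sum>a\<in>UNIV - {0}. nf q (a * t ^ d)) = (if t = 0 then (Q - 1) * nf q (0::'a) else Q - nf q (0::'a))"
    for t :: 'a
  proof (cases "t = 0")
    case True
    then have "(\<Sum>a\<in>UNIV - {0}. nf q (a * t ^ d)) = (\<Sum>a\<in>UNIV - {0::'a}. nf q (0::'a))"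
      using assms by (intro sum.cong) (auto simp: power_0_left)
    also have "\<dots> = (Q - 1) * nf q (0::'a)" by (simp add: Q_def card_Diff_singleton)
    finally show ?thesis using True by simp
  next
    case False
    have "(\<Sum>a\<in>UNIV - {0}. nf q (a * t ^ d)) = (\<Sum>w\<in>UNIV - {0}. nf q (w::'a))"
      by (rule sum.reindex_bij_witness[of _ "\<lambda>w. w / t ^ d" "\<lambda>a. a * t ^ d"]) (use False in auto)
    also have "\<dots> = (\<Sum>w\<in>UNIV. nf q (w::'a)) - nf q (0::'a)"
      by (simp add: sum_diff1_nat)
    also have "\<dots> = Q - nf q (0::'a)" by (simp add: nf_sum Q_def)
    finally show ?thesis using False by simp
  qed
  have total: "(\<Sum>a\<in>UNIV - {0}. Na a) = (Q - 1) * Q"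
  proof -
    have "(\<Sum>a\<in>UNIV - {0}. Na a) = (\<Sum>t\<in>(UNIV::'a set). \<Sum>a\<in>UNIV - {0}. nf q (a * t ^ d))"
      unfolding Na_def by (rule sum.swap)
    also have "\<dots> = (\<Sum>t\<in>(UNIV::'a set). if t = 0 then (Q - 1) * nf q (0::'a) else Q - nf q (0::'a))"
      by (simp add: inner)
    also have "\<dots> = (Q - 1) * nf q (0::'a) + (\<Sum>t\<in>UNIV - {0::'a}. if t = 0 then (Q - 1) * nf q (0::'a) else Q - nf q (0::'a))"
      by (subst sum.remove[of UNIV 0]) auto
    also have "(\<Sum>t\<in>UNIV - {0::'a}. if t = 0 then (Q - 1) * nf q (0::'a) else Q - nf q (0::'a)) = (Q - 1) * (Q - nf q (0::'a))"
      by (simp add: Q_def card_Diff_singleton)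
    also have "(Q - 1) * nf q (0::'a) + (Q - 1) * (Q - nf q (0::'a)) = (Q - 1) * Q"
      using nf0 by (simp add: add_mult_distrib2[symmetric])
    finally show ?thesis .
  qed
  obtain a :: 'a where a: "a \<noteq> 0" "Na a \<le> Q"
  proof (rule ccontr)
    assume "\<not> thesis"
    then have lt: "\<forall>a\<in>UNIV - {0::'a}. Q < Na a" using that by force
    have "(\<Sum>a\<in>UNIV - {0::'a}. Q) < (\<Sum>a\<in>UNIV - {0}. Na a)"
    proof (rule sum_strict_mono)
      have "(1::'a) \<in> UNIV - {0}" by simp
      then show "UNIV - {0::'a} \<noteq> {}" by blast
    qed (use lt in simp_all)
    moreover have "(\<Sum>a\<in>UNIV - {0::'a}. Q) = (Q - 1) * Q"
      by (simp add: card_Diff_singleton Q_def)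
    ultimately show False using total by linarith
  qed
  define f :: "'a mpoly" where "f = Poly_Mapping.single (Poly_Mapping.single 0 d) a"
  have "mpoly_in_vars 1 f" using a by (simp add: f_def mpoly_in_vars_def)
  moreover have "homogeneous_of_degree d f"
    using a assms by (simp add: f_def homogeneous_of_degree_def monomial_degree_def single_neq0)
  moreover have "N_AS 1 q f \<le> Q" using a NAS by (simp add: f_def)
  ultimately show ?thesis unfolding Q_def by blast
qed

lemma card_filter_sum:
  assumes "finite X"
  shows "card {z\<in>X. P z} = (\<Sum>z\<in>X. if P z then 1 else (0::nat))"
  using assms by (simp add: sum.If_cases Int_def)

lemma block_factor:
  fixes S :: "nat set"
  assumes "prime p" "card (UNIV::'a::{finite,field} set) = p ^ n" "n \<ge> 1" "finite S" "S \<noteq> {}"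
  shows "\<not> p dvd card {w\<in>PiE S (\<lambda>_. UNIV::'a set). \<exists>i\<in>S. w i = 0}"
proof
  define Q where "Q = card (UNIV::'a set)"
  define A where "A = {w\<in>PiE S (\<lambda>_. UNIV::'a set). \<exists>i\<in>S. w i = 0}"
  assume dvdA: "p dvd card A"
  have split: "PiE S (\<lambda>_. UNIV::'a set) = A \<union> PiE S (\<lambda>_. UNIV - {0})"
    unfolding A_def by (auto simp: PiE_iff extensional_def)
  have disj: "A \<inter> PiE S (\<lambda>_. UNIV - {0}) = {}"
    unfolding A_def by (auto simp: PiE_iff)
  have "card (PiE S (\<lambda>_. UNIV::'a set)) = card A + card (PiE S (\<lambda>_. UNIV - {0::'a}))"
  proof -
    have "finite A" unfolding A_def
      by (rule finite_subset[of _ "PiE S (\<lambda>_. UNIV::'a set)"]) (auto intro: finite_PiE assms(4))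
    then show ?thesis
      unfolding split by (rule card_Un_disjoint) (use assms(4) disj in \<open>auto intro: finite_PiE\<close>)
  qed
  moreover have "card (PiE S (\<lambda>_. UNIV::'a set)) = Q ^ card S"
    using assms(4) by (simp add: card_PiE Q_def)
  moreover have "card (PiE S (\<lambda>_. UNIV - {0::'a})) = (Q - 1) ^ card S"
    using assms(4) by (simp add: card_PiE Q_def card_Diff_singleton)
  ultimately have eq: "Q ^ card S = card A + (Q - 1) ^ card S" by simp
  have cS: "card S \<ge> 1" using assms(4,5) by (simp add: Suc_leI card_gt_0_iff)
  have pQ: "p dvd Q" using assms(2,3) unfolding Q_def by (simp add: dvd_power)
  moreover have "Q dvd Q ^ card S" using cS by (intro dvd_power) simp
  ultimately have "p dvd Q ^ card S" by (rule dvd_trans)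
  then have "p dvd (Q - 1) ^ card S" using eq dvdA by (metis dvd_add_right_iff)
  then have "p dvd Q - 1" using assms(1) prime_dvd_power by blast
  moreover have "Q \<ge> 1" unfolding Q_def by (simp add: Suc_leI finite_UNIV_card_ge_0)
  ultimately have "p dvd Q - (Q - 1)" using pQ dvd_diff_nat by blast
  then have "p dvd 1" using \<open>Q \<ge> 1\<close> by simp
  then show False using prime_gt_1_nat[OF assms(1)] by simp
qed

lemma block_count:
  fixes G :: "nat \<Rightarrow> nat set" and p n g :: nat
  assumes "prime p" "card (UNIV::'a::{finite,field} set) = p ^ n" "n \<ge> 1"
    and fin: "\<And>b. b < g \<Longrightarrow> finite (G b)" and ne: "\<And>b. b < g \<Longrightarrow> G b \<noteq> {}"
    and disj: "\<And>b b'. b < g \<Longrightarrow> b' < g \<Longrightarrow> b \<noteq> b' \<Longrightarrow> G b \<inter> G b' = {}"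
  shows "b \<le> g \<Longrightarrow> \<not> p dvd card {z\<in>PiE (\<Union>b'<b. G b') (\<lambda>_. UNIV::'a set). \<forall>b'<b. \<exists>i\<in>G b'. z i = 0}"
proof (induction b)
  case 0
  then show ?case using prime_gt_1_nat[OF assms(1)] by simp
next
  case (Suc b)
  let ?Z = "\<Union>b'<b. G b'"
  let ?ind = "\<lambda>P. if P then 1 else (0::nat)"
  have finZ: "finite ?Z" using fin Suc.prems by auto
  have finG: "finite (G b)" using fin Suc.prems by auto
  have disjZ: "?Z \<inter> G b = {}"
  proof (rule ccontr)
    assume "?Z \<inter> G b \<noteq> {}"
    then obtain i b' where i: "b' < b" "i \<in> G b'" "i \<in> G b" by blast
    moreover have "G b' \<inter> G b = {}" using disj[of b' b] i(1) Suc.prems by simp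
    ultimately show False by blast
  qed
  have U: "(\<Union>b'<Suc b. G b') = ?Z \<union> G b" by (auto simp: lessThan_Suc)
  have "card {z\<in>PiE (\<Union>b'<Suc b. G b') (\<lambda>_. UNIV::'a set). \<forall>b'<Suc b. \<exists>i\<in>G b'. z i = 0}
      = (\<Sum>z\<in>PiE (?Z \<union> G b) (\<lambda>_. UNIV::'a set). ?ind (\<forall>b'<Suc b. \<exists>i\<in>G b'. z i = 0))"
    unfolding U by (rule card_filter_sum) (use finZ finG in \<open>auto intro: finite_PiE\<close>)
  also have "\<dots> = (\<Sum>y\<in>PiE ?Z (\<lambda>_. UNIV::'a set). \<Sum>w\<in>PiE (G b) (\<lambda>_. UNIV::'a set).
        ?ind (\<forall>b'<Suc b. \<exists>i\<in>G b'. (if i \<in> ?Z then y i else w i) = 0))"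
    by (rule sum_PiE_Un) (use finZ finG disjZ in auto)
  also have "\<dots> = (\<Sum>y\<in>PiE ?Z (\<lambda>_. UNIV::'a set). \<Sum>w\<in>PiE (G b) (\<lambda>_. UNIV::'a set).
        ?ind (\<forall>b'<b. \<exists>i\<in>G b'. y i = 0) * ?ind (\<exists>i\<in>G b. w i = 0))"
  proof (intro sum.cong refl)
    fix y w :: "nat \<Rightarrow> 'a"
    have "(\<forall>b'<Suc b. \<exists>i\<in>G b'. (if i \<in> ?Z then y i else w i) = 0) \<longleftrightarrow>
          (\<forall>b'<b. \<exists>i\<in>G b'. (if i \<in> ?Z then y i else w i) = 0) \<and> (\<exists>i\<in>G b. (if i \<in> ?Z then y i else w i) = 0)"
      by (auto simp: less_Suc_eq)
    also have "(\<forall>b'<b. \<exists>i\<in>G b'. (if i \<in> ?Z then y i else w i) = 0) \<longleftrightarrow> (\<forall>b'<b. \<exists>i\<in>G b'. y i = 0)"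
    proof -
      have "(\<exists>i\<in>G b'. (if i \<in> ?Z then y i else w i) = 0) \<longleftrightarrow> (\<exists>i\<in>G b'. y i = 0)" if "b' < b" for b'
      proof (rule bex_cong[OF refl])
        fix i assume "i \<in> G b'"
        then have "i \<in> ?Z" using that by blast
        then show "((if i \<in> ?Z then y i else w i) = 0) = (y i = 0)" by simp
      qed
      then show ?thesis by blast
    qed
    also have "(\<exists>i\<in>G b. (if i \<in> ?Z then y i else w i) = 0) \<longleftrightarrow> (\<exists>i\<in>G b. w i = 0)"
      using disjZ by auto
    finally show "?ind (\<forall>b'<Suc b. \<exists>i\<in>G b'. (if i \<in> ?Z then y i else w i) = 0) =
        ?ind (\<forall>b'<b. \<exists>i\<in>G b'. y i = 0) * ?ind (\<exists>i\<in>G b. w i = 0)" by simp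
  qed
  also have "\<dots> = (\<Sum>y\<in>PiE ?Z (\<lambda>_. UNIV::'a set). ?ind (\<forall>b'<b. \<exists>i\<in>G b'. y i = 0)) *
                  (\<Sum>w\<in>PiE (G b) (\<lambda>_. UNIV::'a set). ?ind (\<exists>i\<in>G b. w i = 0))"
    by (simp add: sum_product)
  also have "\<dots> = card {z\<in>PiE ?Z (\<lambda>_. UNIV::'a set). \<forall>b'<b. \<exists>i\<in>G b'. z i = 0} *
                  card {w\<in>PiE (G b) (\<lambda>_. UNIV::'a set). \<exists>i\<in>G b. w i = 0}"
    by (subst (1 2) card_filter_sum) (use finZ finG in \<open>auto intro: finite_PiE\<close>)
  finally have eq: "card {z\<in>PiE (\<Union>b'<Suc b. G b') (\<lambda>_. UNIV::'a set). \<forall>b'<Suc b. \<exists>i\<in>G b'. z i = 0} =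
      card {z\<in>PiE ?Z (\<lambda>_. UNIV::'a set). \<forall>b'<b. \<exists>i\<in>G b'. z i = 0} *
                  card {w\<in>PiE (G b) (\<lambda>_. UNIV::'a set). \<exists>i\<in>G b. w i = 0}" .
  have h1: "\<not> p dvd card {z\<in>PiE ?Z (\<lambda>_. UNIV::'a set). \<forall>b'<b. \<exists>i\<in>G b'. z i = 0}"
    using Suc by simp
  have h2: "\<not> p dvd card {w\<in>PiE (G b) (\<lambda>_. UNIV::'a set). \<exists>i\<in>G b. w i = 0}"
    by (rule block_factor[OF assms(1-3) finG]) (use ne Suc.prems in auto)
  show ?case unfolding eq using h1 h2 assms(1) prime_dvd_mult_iff by blast
qed

definition blk :: "nat \<Rightarrow> nat \<Rightarrow> nat \<Rightarrow> nat \<Rightarrow> nat set" where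
  "blk c s k b = {c + b * s ..< min k (c + Suc b * s)}"

lemma blk_arith:
  assumes "s \<ge> 1" "c < k" "g = (k - c - 1) div s + 1"
  shows blk_first: "\<And>b. b < g \<Longrightarrow> c + b * s \<in> blk c s k b"
    and blk_card: "\<And>b. card (blk c s k b) \<le> s"
    and blk_sub: "\<And>b. blk c s k b \<subseteq> {c..<k}"
    and blk_disj: "\<And>b b'. b \<noteq> b' \<Longrightarrow> blk c s k b \<inter> blk c s k b' = {}"
    and blk_Un: "(\<Union>b<g. blk c s k b) = {c..<k}"
    and blk_g: "g \<ge> 1"
proof -
  show "g \<ge> 1" using assms(3) by simp
  show "c + b * s \<in> blk c s k b" if "b < g" for b
  proof -
    have "b \<le> (k - c - 1) div s" using that assms(3) by simp
    then have "b * s \<le> (k - c - 1) div s * s" by simp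
    also have "\<dots> \<le> k - c - 1" by (rule div_times_less_eq_dividend)
    finally have "c + b * s < k" using assms(2) by linarith
    moreover have "c + b * s < c + Suc b * s" using assms(1) by simp
    ultimately show ?thesis by (simp add: blk_def)
  qed
  show "card (blk c s k b) \<le> s" for b by (simp add: blk_def)
  show "blk c s k b \<subseteq> {c..<k}" for b by (auto simp: blk_def)
  show "blk c s k b \<inter> blk c s k b' = {}" if "b \<noteq> b'" for b b'
  proof -
    have *: "blk c s k b \<inter> blk c s k b' = {}" if "b < b'" for b b'
    proof -
      have "Suc b * s \<le> b' * s" using that by (intro mult_le_mono1) simp
      then show ?thesis by (auto simp: blk_def)
    qed
    show ?thesis using that *[of b b'] *[of b' b] by (cases "b < b'") (auto simp: Int_commute)
  qed
  show "(\<Union>b<g. blk c s k b) = {c..<k}"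
  proof
    show "(\<Union>b<g. blk c s k b) \<subseteq> {c..<k}" by (auto simp: blk_def)
  next
    show "{c..<k} \<subseteq> (\<Union>b<g. blk c s k b)"
    proof
      fix i assume i: "i \<in> {c..<k}"
      define b where "b = (i - c) div s"
      have "i - c \<le> k - c - 1" using i by auto
      then have "b \<le> (k - c - 1) div s" unfolding b_def by (rule div_le_mono)
      then have "b < g" using assms(3) by simp
      moreover have "b * s \<le> i - c" unfolding b_def by (rule div_times_less_eq_dividend)
      moreover have "i - c < Suc b * s"
      proof -
        have "i - c = b * s + (i - c) mod s" unfolding b_def by simp
        moreover have "(i - c) mod s < s" using assms(1) by simp
        ultimately show ?thesis by simp
      qed
      ultimately have "b < g" "c + b * s \<le> i" "i < c + Suc b * s" using i by auto
      then have "i \<in> blk c s k b" using i by (simp add: blk_def)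
      then show "i \<in> (\<Union>b<g. blk c s k b)" using \<open>b < g\<close> by blast
    qed
  qed
qed

lemma blk_g_le:
  fixes s c k g :: nat
  assumes "s \<ge> 1" "c < k" "g = (k - c - 1) div s + 1" "k \<le> c * (s + 1)"
  shows "g \<le> c"
proof -
  have "c * (s + 1) = c * s + c" by simp
  then have "k - c - 1 < c * s" using assms(2,4) by linarith
  then have "(k - c - 1) div s < c" using assms(1) by (simp add: div_less_iff_less_mult)
  then show ?thesis using assms(3) by simp
qed

lemma case_main:
  fixes p n e q d c k :: nat
  assumes p: "prime p" and card: "card (UNIV::'a::{finite,field} set) = p ^ n" and n1: "n \<ge> 1"
    and q: "q = p ^ e" and e1: "e \<ge> 1"
    and d2: "2 \<le> d" and c1: "1 \<le> c" and ck: "c < k" and kcd: "k \<le> c * d"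
  shows "\<exists>f :: 'a mpoly. mpoly_in_vars k f \<and> homogeneous_of_degree d f \<and>
           multiplicity p (N_AS k q f) = n * c"
proof -
  define s where "s = d - 1"
  define g where "g = (k - c - 1) div s + 1"
  define G where "G = blk c s k"
  define \<beta> where "\<beta> j = min j (g - 1)" for j :: nat
  define E where "E j i = (if i = j then 1 else if i \<in> G (\<beta> j) then
      (if i = c + \<beta> j * s then d - card (G (\<beta> j)) else 1) else (0::nat))" for j i :: nat
  define \<alpha> where "\<alpha> j = Abs_poly_mapping (E j)" for j
  define R where "R j x = (\<Prod>i\<in>G (\<beta> j). x i ^ E j i)" for j and x :: "nat \<Rightarrow> 'a"
  define f :: "'a mpoly" where "f = (\<Sum>j<c. Poly_Mapping.single (\<alpha> j) 1)"
  have s1: "s \<ge> 1" using d2 by (simp add: s_def)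
  have ds: "d = s + 1" using d2 by (simp add: s_def)
  note blk = blk_arith[OF s1 ck g_def]
  have gc: "g \<le> c" by (rule blk_g_le[OF s1 ck g_def]) (use kcd ds in simp)
  have g1: "g \<ge> 1" by (rule blk(6))
  have finG: "finite (G b)" for b by (simp add: G_def blk_def)
  have Gsub: "G b \<subseteq> {c..<k}" for b unfolding G_def by (rule blk(3))
  have Gfirst: "b < g \<Longrightarrow> c + b * s \<in> G b" for b unfolding G_def by (rule blk(1))
  have Gcard: "card (G b) \<le> s" for b unfolding G_def by (rule blk(2))
  have Gdisj: "b \<noteq> b' \<Longrightarrow> G b \<inter> G b' = {}" for b b' unfolding G_def by (rule blk(4))
  have GUn: "(\<Union>b<g. G b) = {c..<k}" unfolding G_def by (rule blk(5))
  have \<beta>g: "\<beta> j < g" for j using g1 by (simp add: \<beta>_def)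
  have \<beta>id: "b < g \<Longrightarrow> \<beta> b = b" for b by (simp add: \<beta>_def)
  have Gne: "b < g \<Longrightarrow> G b \<noteq> {}" for b using Gfirst by blast
  have Gcard1: "b < g \<Longrightarrow> card (G b) \<ge> 1" for b using Gne finG by (simp add: Suc_leI card_gt_0_iff)
  have Esupp: "{i. E j i \<noteq> 0} \<subseteq> insert j (G (\<beta> j))" for j by (auto simp: E_def)
  have Efin: "finite {i. E j i \<noteq> 0}" for j using Esupp finG by (meson finite_insert finite_subset)
  have lk\<alpha>: "Poly_Mapping.lookup (\<alpha> j) = E j" for j unfolding \<alpha>_def using Efin by simp
  have keys\<alpha>: "Poly_Mapping.keys (\<alpha> j) \<subseteq> insert j (G (\<beta> j))" for j
  proof
    fix i assume "i \<in> Poly_Mapping.keys (\<alpha> j)"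
    then have "E j i \<noteq> 0" by (simp add: in_keys_iff lk\<alpha>)
    then show "i \<in> insert j (G (\<beta> j))" using Esupp[of j] by blast
  qed
  have Epos: "j < c \<Longrightarrow> i \<in> G (\<beta> j) \<Longrightarrow> E j i \<ge> 1" for j i
  proof -
    assume j: "j < c" and i: "i \<in> G (\<beta> j)"
    then have "i \<noteq> j" using Gsub by fastforce
    moreover have "card (G (\<beta> j)) \<le> s" by (rule Gcard)
    ultimately show "E j i \<ge> 1" using i ds by (auto simp: E_def)
  qed
  have jnotG: "j < c \<Longrightarrow> j \<notin> G b" for j b using Gsub by fastforce
  have Ejj: "E j j = 1" for j by (simp add: E_def)
  have Eoff: "j < c \<Longrightarrow> j' \<noteq> j \<Longrightarrow> E j' j = 0" for j j'
    using jnotG by (simp add: E_def)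
  have \<alpha>inj: "j < c \<Longrightarrow> j' < c \<Longrightarrow> \<alpha> j = \<alpha> j' \<Longrightarrow> j = j'" for j j'
  proof (rule ccontr)
    assume "j < c" "j' < c" "\<alpha> j = \<alpha> j'" "j \<noteq> j'"
    then have "E j j = E j' j" using lk\<alpha> by metis
    then show False using Ejj Eoff[of j j'] \<open>j < c\<close> \<open>j \<noteq> j'\<close> by simp
  qed
  have degree: "monomial_degree (\<alpha> j) = d" if j: "j < c" for j
  proof -
    let ?G = "G (\<beta> j)"
    let ?f0 = "c + \<beta> j * s"
    have f0: "?f0 \<in> ?G" using Gfirst \<beta>g by blast
    have cG: "card ?G \<ge> 1" "card ?G \<le> s" using Gcard1 \<beta>g Gcard by auto
    have "monomial_degree (\<alpha> j) = (\<Sum>i\<in>insert j ?G. E j i)"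
      by (subst monomial_degree_superset[OF _ keys\<alpha>]) (simp_all add: finG lk\<alpha>)
    also have "\<dots> = E j j + (\<Sum>i\<in>?G. E j i)"
      using jnotG[OF j] finG by simp
    also have "(\<Sum>i\<in>?G. E j i) = (\<Sum>i\<in>?G. if i = ?f0 then d - card ?G else 1)"
      using jnotG[OF j] by (intro sum.cong refl) (auto simp: E_def)
    also have "\<dots> = (d - card ?G) + (\<Sum>i\<in>?G - {?f0}. if i = ?f0 then d - card ?G else 1)"
      using f0 finG by (subst sum.remove[of _ ?f0]) auto
    also have "(\<Sum>i\<in>?G - {?f0}. if i = ?f0 then d - card ?G else 1) = card ?G - 1"
      using f0 finG by (simp add: card_Diff_singleton)
    finally show ?thesis using Ejj cG ds by simp
  qed
  have lkf: "Poly_Mapping.lookup f (\<alpha> j) = 1" if j: "j < c" for j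
  proof -
    have "Poly_Mapping.lookup f (\<alpha> j) = (\<Sum>j'<c. if j' = j then 1 else 0)"
      unfolding f_def lookup_sum
    proof (intro sum.cong refl)
      fix j' assume "j' \<in> {..<c}"
      then show "Poly_Mapping.lookup (Poly_Mapping.single (\<alpha> j') (1::'a)) (\<alpha> j) = (if j' = j then 1 else 0)"
        using \<alpha>inj[of j' j] j by (auto simp: lookup_single when_def)
    qed
    also have "\<dots> = 1" using j by simp
    finally show ?thesis .
  qed
  have keysf: "Poly_Mapping.keys f \<subseteq> \<alpha> ` {..<c}"
  proof -
    have "Poly_Mapping.keys f \<subseteq> (\<Union>j\<in>{..<c}. Poly_Mapping.keys (Poly_Mapping.single (\<alpha> j) (1::'a)))"
      unfolding f_def by (rule keys_sum)
    also have "\<dots> \<subseteq> \<alpha> ` {..<c}" by auto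
    finally show ?thesis .
  qed
  have fne: "f \<noteq> 0"
  proof
    assume "f = 0"
    then have "Poly_Mapping.lookup f (\<alpha> 0) = 0" by simp
    then show False using lkf[of 0] c1 by simp
  qed
  have invars: "mpoly_in_vars k f"
    unfolding mpoly_in_vars_def
  proof
    fix \<gamma> assume "\<gamma> \<in> Poly_Mapping.keys f"
    then obtain j where j: "j < c" "\<gamma> = \<alpha> j" using keysf by blast
    have "insert j (G (\<beta> j)) \<subseteq> {..<k}" using j ck Gsub by fastforce
    then show "Poly_Mapping.keys \<gamma> \<subseteq> {..<k}" using keys\<alpha>[of j] j by blast
  qed
  have homog: "homogeneous_of_degree d f"
    unfolding homogeneous_of_degree_def using fne keysf degree by blast
  have eval: "mpoly_eval f x = (\<Sum>j<c. x j * R j x)" for x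
  proof -
    have "mpoly_eval f x = (\<Sum>j<c. mmono (\<alpha> j) x)"
      unfolding f_def by (simp add: mpoly_eval_sum mpoly_eval_single)
    also have "\<dots> = (\<Sum>j<c. x j * R j x)"
    proof (intro sum.cong refl)
      fix j assume "j \<in> {..<c}"
      then have j: "j < c" by simp
      have "mmono (\<alpha> j) x = (\<Prod>i\<in>insert j (G (\<beta> j)). x i ^ E j i)"
        by (subst mmono_superset[OF _ keys\<alpha>]) (simp_all add: finG lk\<alpha>)
      also have "\<dots> = x j ^ E j j * R j x"
        using jnotG[OF j] finG by (simp add: R_def)
      finally show "mmono (\<alpha> j) x = x j * R j x" using Ejj by simp
    qed
    finally show ?thesis .
  qed
  define Q where "Q = card (UNIV::'a set)"
  define Z where "Z = {c..<k}"
  define A where "A z = (\<forall>b<g. \<exists>i\<in>G b. z i = (0::'a))" for z :: "nat \<Rightarrow> 'a"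
  define n0 where "n0 = nf q (0::'a)"
  define B where "B = card {z\<in>PiE Z (\<lambda>_. UNIV::'a set). A z}"
  have Ku: "{..<k} = Z \<union> {..<c}" using ck by (auto simp: Z_def)
  have RA: "(\<forall>j\<in>{..<c}. R j z = 0) \<longleftrightarrow> A z" for z
  proof -
    have Rz: "R j z = 0 \<longleftrightarrow> (\<exists>i\<in>G (\<beta> j). z i = 0)" if j: "j < c" for j
    proof -
      have "R j z = 0 \<longleftrightarrow> (\<exists>i\<in>G (\<beta> j). z i ^ E j i = 0)"
        unfolding R_def by (rule prod_zero_iff[OF finG])
      also have "\<dots> \<longleftrightarrow> (\<exists>i\<in>G (\<beta> j). z i = 0)"
        using Epos[OF j] by (intro bex_cong refl) (force simp: power_eq_0_iff)
      finally show ?thesis .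
    qed
    show ?thesis
    proof
      assume H: "\<forall>j\<in>{..<c}. R j z = 0"
      show "A z" unfolding A_def
      proof (intro allI impI)
        fix b assume b: "b < g"
        then have "b < c" using gc by simp
        then have "R b z = 0" using H by simp
        then show "\<exists>i\<in>G b. z i = 0" using Rz[OF \<open>b < c\<close>] \<beta>id[OF b] by simp
      qed
    next
      assume "A z"
      then show "\<forall>j\<in>{..<c}. R j z = 0" using Rz \<beta>g unfolding A_def by auto
    qed
  qed
  have n0pos: "n0 \<ge> 1"
  proof -
    have "q \<ge> 1" using p q by (simp add: Suc_leI prime_gt_0_nat)
    then show ?thesis unfolding n0_def using nf0_ge2[of q, where 'a='a] by fastforce
  qed
  have N1: "N_AS k q f = (\<Sum>x\<in>PiE (Z \<union> {..<c}) (\<lambda>_. UNIV). nf q (\<Sum>j\<in>{..<c}. x j * R j x))"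
    by (simp add: N_AS_sum eval Ku)
  also have "\<dots> = (\<Sum>z\<in>PiE Z (\<lambda>_. UNIV). if (\<forall>j\<in>{..<c}. R j z = 0) then card (UNIV::'a set) ^ card {..<c} * nf q (0::'a)
        else card (UNIV::'a set) ^ (card {..<c} - 1) * (\<Sum>w\<in>UNIV. nf q (w::'a)))"
  proof (rule N_pivot)
    show "finite {..<c}" by simp
    show "finite Z" by (simp add: Z_def)
    show "{..<c} \<inter> Z = {}" by (auto simp: Z_def)
    fix j and x x' :: "nat \<Rightarrow> 'a"
    assume H: "\<And>i. i \<in> Z \<Longrightarrow> x i = x' i"
    show "R j x = R j x'" unfolding R_def
    proof (intro prod.cong refl)
      fix i assume "i \<in> G (\<beta> j)"
      then have "i \<in> Z" using Gsub unfolding Z_def by blast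
      then show "x i ^ E j i = x' i ^ E j i" using H by simp
    qed
  qed
  also have "\<dots> = (\<Sum>z\<in>PiE Z (\<lambda>_. UNIV). Q ^ c * (if A z then n0 else 1))"
  proof (intro sum.cong refl)
    fix z :: "nat \<Rightarrow> 'a"
    have "Q ^ (c - 1) * Q = Q ^ c" using c1 by (metis Suc_diff_le diff_Suc_1 mult.commute power_Suc)
    then show "(if (\<forall>j\<in>{..<c}. R j z = 0) then card (UNIV::'a set) ^ card {..<c} * nf q (0::'a)
        else card (UNIV::'a set) ^ (card {..<c} - 1) * (\<Sum>w\<in>UNIV. nf q (w::'a))) = Q ^ c * (if A z then n0 else 1)"
      using RA[of z] by (simp add: Q_def n0_def nf_sum)
  qed
  also have "\<dots> = Q ^ c * (\<Sum>z\<in>PiE Z (\<lambda>_. UNIV::'a set). 1 + (if A z then n0 - 1 else 0))"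
  proof -
    have "(\<Sum>z\<in>PiE Z (\<lambda>_. UNIV::'a set). Q ^ c * (if A z then n0 else 1)) =
          Q ^ c * (\<Sum>z\<in>PiE Z (\<lambda>_. UNIV::'a set). (if A z then n0 else 1))"
      by (simp add: sum_distrib_left)
    also have "(\<Sum>z\<in>PiE Z (\<lambda>_. UNIV::'a set). (if A z then n0 else 1)) =
          (\<Sum>z\<in>PiE Z (\<lambda>_. UNIV::'a set). 1 + (if A z then n0 - 1 else 0))"
      by (intro sum.cong refl) (use n0pos in auto)
    finally show ?thesis .
  qed
  also have "\<dots> = Q ^ c * (Q ^ (k - c) + (n0 - 1) * B)"
  proof -
    have "(\<Sum>z\<in>PiE Z (\<lambda>_. UNIV::'a set). 1 + (if A z then n0 - 1 else 0)) =
          card (PiE Z (\<lambda>_. UNIV::'a set)) + (n0 - 1) * (\<Sum>z\<in>PiE Z (\<lambda>_. UNIV::'a set). if A z then 1 else 0)"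
    proof -
      have "(\<Sum>z\<in>PiE Z (\<lambda>_. UNIV::'a set). 1 + (if A z then n0 - 1 else 0)) =
            (\<Sum>z\<in>PiE Z (\<lambda>_. UNIV::'a set). 1) + (\<Sum>z\<in>PiE Z (\<lambda>_. UNIV::'a set). (if A z then n0 - 1 else 0))"
        by (rule sum.distrib)
      also have "(\<Sum>z\<in>PiE Z (\<lambda>_. UNIV::'a set). (if A z then n0 - 1 else 0)) =
                 (\<Sum>z\<in>PiE Z (\<lambda>_. UNIV::'a set). (n0 - 1) * (if A z then 1 else 0))"
        by (intro sum.cong refl) simp
      also have "\<dots> = (n0 - 1) * (\<Sum>z\<in>PiE Z (\<lambda>_. UNIV::'a set). if A z then 1 else 0)"
        by (rule sum_distrib_left[symmetric])
      finally show ?thesis by simp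
    qed
    also have "card (PiE Z (\<lambda>_. UNIV::'a set)) = Q ^ (k - c)" by (simp add: card_PiE Z_def Q_def)
    also have "(\<Sum>z\<in>PiE Z (\<lambda>_. UNIV::'a set). if A z then 1 else 0) = B"
      unfolding B_def by (rule card_filter_sum[symmetric]) (simp add: Z_def finite_PiE)
    finally show ?thesis by simp
  qed
  finally have Neq: "N_AS k q f = Q ^ c * (Q ^ (k - c) + (n0 - 1) * B)" .
  have Bnd: "\<not> p dvd B"
  proof -
    have "\<not> p dvd card {z\<in>PiE (\<Union>b'<g. G b') (\<lambda>_. UNIV::'a set). \<forall>b'<g. \<exists>i\<in>G b'. z i = 0}"
      by (rule block_count[OF p card n1, where G=G and g=g and b=g]) (use finG Gne Gdisj in auto)
    then show ?thesis unfolding B_def A_def Z_def GUn .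
  qed
  have pn0: "p dvd n0" unfolding n0_def using p_dvd_nf0[OF p card q e1] .
  have Mnd: "\<not> p dvd (Q ^ (k - c) + (n0 - 1) * B)"
  proof
    assume H: "p dvd (Q ^ (k - c) + (n0 - 1) * B)"
    have "p dvd Q" using card n1 by (simp add: Q_def dvd_power)
    moreover have "Q dvd Q ^ (k - c)" using ck by (intro dvd_power) simp
    ultimately have "p dvd Q ^ (k - c)" by (rule dvd_trans)
    then have "p dvd (n0 - 1) * B" using H by (simp add: dvd_add_right_iff)
    then have "p dvd n0 - 1" using Bnd p prime_dvd_mult_iff by blast
    then have "p dvd n0 - (n0 - 1)" using pn0 dvd_diff_nat by blast
    then have "p dvd 1" using n0pos by simp
    then show False using prime_gt_1_nat[OF p] by simp
  qed
  have "multiplicity p (N_AS k q f) = multiplicity p (p ^ (n * c) * (Q ^ (k - c) + (n0 - 1) * B))"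
    by (simp add: Neq Q_def card power_mult)
  also have "\<dots> = n * c" by (rule mult_exact[OF p Mnd])
  finally show ?thesis using invars homog by blast
qed

lemma ceil_facts:
  fixes k d :: nat
  assumes "k \<ge> 1" "d \<ge> 1"
  shows "nat \<lceil>real k / real d\<rceil> \<ge> 1" "k \<le> nat \<lceil>real k / real d\<rceil> * d"
    "d \<ge> 2 \<Longrightarrow> k \<ge> 2 \<Longrightarrow> nat \<lceil>real k / real d\<rceil> < k" "d = 1 \<Longrightarrow> nat \<lceil>real k / real d\<rceil> = k"
proof -
  define C where "C = \<lceil>real k / real d\<rceil>"
  have cc: "of_int C - 1 < real k / real d" "real k / real d \<le> of_int C"
    using ceiling_correct unfolding C_def by blast+
  have pos: "real k / real d > 0" using assms by simp
  then have C1: "C \<ge> 1" unfolding C_def by simp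
  then have rc: "real (nat C) = of_int C" by simp
  show "nat \<lceil>real k / real d\<rceil> \<ge> 1" using C1 unfolding C_def by (subst le_nat_iff) auto
  have "real k \<le> of_int C * real d" using cc(2) assms(2) by (simp add: divide_le_eq)
  then have "real k \<le> real (nat C * d)" using rc by simp
  then show "k \<le> nat \<lceil>real k / real d\<rceil> * d" unfolding C_def by linarith
  show "nat \<lceil>real k / real d\<rceil> < k" if "d \<ge> 2" "k \<ge> 2"
  proof -
    have "real k / real d \<le> real k / 2" using that by (intro divide_left_mono) auto
    then have "of_int C < real k / 2 + 1" using cc(1) by linarith
    then have "real (nat C) < real k" using rc that by linarith
    then show ?thesis unfolding C_def by linarith
  qed
  show "nat \<lceil>real k / real d\<rceil> = k" if "d = 1" using that by simp
qed

theorem proposition5p2: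
  fixes p e q m k :: nat and d :: nat
  assumes "prime p" and "e \<ge> 1" and "q = p ^ e"
    and "m \<ge> 1" and "k \<ge> 1"
    and "card (UNIV :: 'a set) = q ^ m"
    and "0 < d" and "d \<le> k * (q ^ m - 1)"
  shows "\<exists>f :: 'a::{finite,field} mpoly. mpoly_in_vars k f \<and> homogeneous_of_degree d f \<and>
           multiplicity p (N_AS k q f) \<le> e * m * nat \<lceil>real k / real d\<rceil>"
proof -
  define c where "c = nat \<lceil>real k / real d\<rceil>"
  have d1: "d \<ge> 1" using assms(7) by simp
  note cf = ceil_facts[OF assms(5) d1, folded c_def]
  have card: "card (UNIV :: 'a set) = p ^ (e * m)" using assms(3,6) by (simp add: power_mult)
  have n1: "e * m \<ge> 1" using assms(2,4) by simp
  show ?thesis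
  proof (cases "d = 1")
    case True
    obtain f :: "'a mpoly" where f: "mpoly_in_vars k f" "homogeneous_of_degree 1 f"
      "N_AS k q f = card (UNIV::'a set) ^ k"
      using case_d1[OF assms(5), where 'a='a and q=q] by blast
    have "multiplicity p (N_AS k q f) = e * m * k"
      using f(3) card assms(1) by (simp add: power_mult[symmetric] prime_elem_multiplicity_power_distrib)
    then show ?thesis using f True cf(4) unfolding c_def by auto
  next
    case False
    then have d2: "d \<ge> 2" using d1 by simp
    show ?thesis
    proof (cases "k = 1")
      case True
      obtain f :: "'a mpoly" where f: "mpoly_in_vars 1 f" "homogeneous_of_degree d f"
        "N_AS 1 q f \<le> card (UNIV::'a set)"
        using case_k1[OF d1, where 'a='a and q=q] by blast
      have "multiplicity p (N_AS 1 q f) \<le> e * m"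
        by (rule mult_le_small[OF assms(1)]) (use f(3) card in simp)
      also have "e * m \<le> e * m * c" using cf(1) unfolding c_def by simp
      finally show ?thesis using f True unfolding c_def by auto
    next
      case False
      then have k2: "k \<ge> 2" using assms(5) by simp
      obtain f :: "'a mpoly" where f: "mpoly_in_vars k f" "homogeneous_of_degree d f"
        "multiplicity p (N_AS k q f) = e * m * c"
        using case_main[OF assms(1) card n1 assms(3) assms(2) d2 cf(1)[folded c_def] cf(3)[OF d2 k2, folded c_def]]
          cf(2) unfolding c_def by (auto simp: mult.commute)
      then show ?thesis unfolding c_def by auto
    qed
  qed
qed

end
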